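(* For $A\in\mathcal{M}_s(\mathbb{N}^d)$ the following are equivalent: (i) $A$ has a convolutional inverse; (ii) $A$ is row equivalent to the identity sequence $\mathbbm{I}_s$; (iii) $A$ can be written as the convolution of a finite sequence of elementary matrix sequences.
   Context: $\mathcal{M}_s(\mathbb{N}^d)$ is the set of functions $\mathbb{N}^d\to\mathbb{R}^{s\times s}$, viewed equivalently as $s\times s$ matrices of real sequences on $\mathbb{N}^d$. Convolution: $[A*B](k)=\sum_{l+l'=k,\,l,l'\in\mathbb{N}^d}A(l)B(l')$. $\mathbbm{I}_s(0_d)=I_s$ and $\mathbbm{I}_s(k)=O_s$ for $k\ne0_d$; $A$ has a convolutional inverse if $A*B=B*A=\mathbbm{I}_s$ for some $B$. A real sequence $\alpha$ is convolutionally invertible if it has a convolutional inverse for $s=1$. Elementary row operations: (1) swapping two rows; (2) replacing a row by its entrywise convolution with a convolutionally invertible real sequence; (3) replacing row $j$ by row $j$ plus row $i$ ($i\ne j$) convolved entrywise with a convolutionally invertible real sequence. An elementary matrix sequence is one obtained by a single elementary row operation from $\mathbbm{I}_s$. $A$ and $B$ are row equivalent if one can be obtained from the other by a finite sequence of elementary row operations. *)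

theory Defs
  imports "HOL-Analysis.Analysis"
begin

text \<open>Index set N^d is rendered as nat^'d (d = CARD('d)); s x s real matrices as real^'s^'s.
  A matrix sequence is a function nat^'d => real^'s^'s.\<close>

type_synonym ('d, 's) mseq = "nat^'d \<Rightarrow> real^'s^'s"
type_synonym 'd rseq = "nat^'d \<Rightarrow> real"

definition mconv :: "('d::finite, 's::finite) mseq \<Rightarrow> ('d, 's) mseq \<Rightarrow> ('d, 's) mseq" where
  "mconv A B = (\<lambda>k. \<Sum>(l, l') \<in> {(l, l'). l + l' = k}. A l ** B l')"

definition sconv :: "'d::finite rseq \<Rightarrow> 'd rseq \<Rightarrow> 'd rseq" where
  "sconv a b = (\<lambda>k. \<Sum>(l, l') \<in> {(l, l'). l + l' = k}. a l * b l')"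

definition mid :: "('d::finite, 's::finite) mseq" where
  "mid = (\<lambda>k. if k = 0 then mat 1 else 0)"

definition sid :: "'d::finite rseq" where
  "sid = (\<lambda>k. if k = 0 then 1 else 0)"

definition conv_invertible :: "('d::finite, 's::finite) mseq \<Rightarrow> bool" where
  "conv_invertible A \<longleftrightarrow> (\<exists>B. mconv A B = mid \<and> mconv B A = mid)"

definition sconv_invertible :: "'d::finite rseq \<Rightarrow> bool" where
  "sconv_invertible a \<longleftrightarrow> (\<exists>b. sconv a b = sid \<and> sconv b a = sid)"

definition row_conv :: "'d::finite rseq \<Rightarrow> ('d, 's::finite) mseq \<Rightarrow> 's \<Rightarrow> nat^'d \<Rightarrow> real^'s" where
  "row_conv a A i = (\<lambda>k. \<chi> j. \<Sum>(l, l') \<in> {(l, l'). l + l' = k}. a l * (A l' $ i $ j))"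

definition elem_row_op :: "('d::finite, 's::finite) mseq \<Rightarrow> ('d, 's) mseq \<Rightarrow> bool" where
  "elem_row_op A B \<longleftrightarrow>
     (\<exists>i j. i \<noteq> j \<and> B = (\<lambda>k. \<chi> r. if r = i then A k $ j else if r = j then A k $ i else A k $ r))
   \<or> (\<exists>i a. sconv_invertible a \<and> B = (\<lambda>k. \<chi> r. if r = i then row_conv a A i k else A k $ r))
   \<or> (\<exists>i j a. i \<noteq> j \<and> sconv_invertible a \<and>
        B = (\<lambda>k. \<chi> r. if r = j then A k $ j + row_conv a A i k else A k $ r))"

definition elementary_mseq :: "('d::finite, 's::finite) mseq \<Rightarrow> bool" where
  "elementary_mseq E \<longleftrightarrow> elem_row_op mid E"

definition row_equivalent :: "('d::finite, 's::finite) mseq \<Rightarrow> ('d, 's) mseq \<Rightarrow> bool" where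
  "row_equivalent A B \<longleftrightarrow> elem_row_op\<^sup>*\<^sup>* A B \<or> elem_row_op\<^sup>*\<^sup>* B A"

end

theory Submission
  imports Defs
begin


abbreviation PS :: "nat^'d::finite \<Rightarrow> ((nat^'d) \<times> (nat^'d)) set" where
  "PS k \<equiv> {(l, l'). l + l' = k}"

lemma finite_PS: "finite (PS (k::nat^'d::finite))"
proof -
  have "finite (vec_nth -` (PiE UNIV (\<lambda>i. {..k$i})))"
    by (rule finite_vimageI) (auto intro: finite_PiE simp: inj_def vec_eq_iff)
  moreover have "{l. \<forall>i. l$i \<le> k$i} \<subseteq> vec_nth -` (PiE UNIV (\<lambda>i. {..k$i}))"
    by auto
  ultimately have "finite {l. \<forall>i. l$i \<le> k$i}" by (rule rev_finite_subset)
  hence "finite ((\<lambda>l. (l, k - l)) ` {l. \<forall>i. l$i \<le> k$i})" by simp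
  moreover have "PS k \<subseteq> (\<lambda>l. (l, k - l)) ` {l. \<forall>i. l$i \<le> k$i}"
  proof
    fix p assume "p \<in> PS k"
    then obtain l l' where p: "p = (l, l')" "l + l' = k" by auto
    hence "l' = k - l" apply (clarsimp simp: vec_eq_iff) by (metis add_diff_cancel_left')
    moreover have "\<forall>i. l$i \<le> k$i" using p by auto
    ultimately show "p \<in> (\<lambda>l. (l, k - l)) ` {l. \<forall>i. l$i \<le> k$i}" using p by auto
  qed
  ultimately show ?thesis by (rule finite_subset[rotated])
qed

lemma finite_PS': "finite {p. fst p + snd p = (k::nat^'d::finite)}"
  using finite_PS[of k] by (simp add: split_def)

lemma PS_0: "PS (0::nat^'d::finite) = {(0,0)}"
  by (auto simp: vec_eq_iff)

lemma sum_PS_0: "(\<Sum>(l, l')\<in>PS (0::nat^'d::finite). f l l') = f 0 0"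
  by (simp add: PS_0)

lemma sum_PS_assoc:
  fixes g :: "nat^'d::finite \<Rightarrow> nat^'d \<Rightarrow> nat^'d \<Rightarrow> 'a::comm_monoid_add"
  shows "(\<Sum>(l, l')\<in>PS k. \<Sum>(m, m')\<in>PS l. g m m' l') = (\<Sum>(l, l')\<in>PS k. \<Sum>(m, m')\<in>PS l'. g l m m')"
proof -
  have "(\<Sum>(l, l')\<in>PS k. \<Sum>(m, m')\<in>PS l. g m m' l') = (\<Sum>(p, q)\<in>Sigma (PS k) (\<lambda>(l,l'). PS l). g (fst q) (snd q) (snd p))"
    by (subst sum.Sigma[symmetric]) (auto simp: finite_PS finite_PS' split_def)
  also have "\<dots> = (\<Sum>(p, q)\<in>Sigma (PS k) (\<lambda>(l,l'). PS l'). g (fst p) (fst q) (snd q))"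
    apply (rule sum.reindex_bij_witness[where i = "\<lambda>(p,q). ((fst p + fst q, snd q), (fst p, fst q))"
       and j = "\<lambda>(p,q). ((fst q, snd q + snd p), (snd q, snd p))"])
    by (auto simp: add.assoc)
  also have "\<dots> = (\<Sum>(l, l')\<in>PS k. \<Sum>(m, m')\<in>PS l'. g l m m')"
    by (subst sum.Sigma[symmetric]) (auto simp: finite_PS finite_PS' split_def)
  finally show ?thesis .
qed

lemma sum_PS_swap:
  "(\<Sum>(l, l')\<in>PS (k::nat^'d::finite). f l l') = (\<Sum>(l, l')\<in>PS k. f l' l)"
  by (rule sum.reindex_bij_witness[where i = "\<lambda>(a,b). (b,a)" and j = "\<lambda>(a,b). (b,a)"]) (auto simp: add.commute)

lemma sum_PS_left0:
  "(\<Sum>(l, l')\<in>PS (k::nat^'d::finite). if l = 0 then f l' else 0) = f k"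
proof -
  have "(\<Sum>(l, l')\<in>PS k. if l = 0 then f l' else 0) = (\<Sum>p\<in>PS k. if p = (0,k) then f k else 0)"
  proof (rule sum.cong[OF refl])
    fix p assume p: "p \<in> PS k"
    then obtain a b where ab: "p = (a, b)" "a + b = k" by auto
    then show "(case p of (l, l') \<Rightarrow> if l = 0 then f l' else 0) = (if p = (0, k) then f k else 0)"
      by (cases "a = 0") auto
  qed
  also have "\<dots> = f k" using sum.delta[OF finite_PS, of "(0,k)" "\<lambda>_. f k"] by simp
  finally show ?thesis .
qed


definition nrm :: "nat^'d::finite \<Rightarrow> nat" where "nrm k = (\<Sum>i\<in>UNIV. k$i)"

lemma nrm_add: "nrm (a + b) = nrm a + nrm b"
  by (simp add: nrm_def sum.distrib)

lemma nrm_0[simp]: "nrm 0 = 0"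
  by (simp add: nrm_def)

lemma nrm_pos: "a \<noteq> 0 \<Longrightarrow> nrm a > 0"
proof -
  assume "a \<noteq> 0"
  then obtain i where i: "a$i \<noteq> 0" by (auto simp: vec_eq_iff)
  have "a$i \<le> nrm a" unfolding nrm_def by (rule member_le_sum) auto
  thus ?thesis using i by simp
qed

primrec ginv :: "'d::finite rseq \<Rightarrow> nat \<Rightarrow> 'd rseq" where
  "ginv a 0 = (\<lambda>k. if k = 0 then 1 / a 0 else 0)"
| "ginv a (Suc n) = (\<lambda>k. if nrm k = Suc n
      then - (\<Sum>(l, l')\<in>PS k - {(0, k)}. a l * ginv a n l') / a 0 else ginv a n k)"

definition sinv :: "'d::finite rseq \<Rightarrow> 'd rseq" where
  "sinv a = (\<lambda>k. ginv a (nrm k) k)"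

lemma ginv_stable: "nrm k \<le> n \<Longrightarrow> ginv a n k = sinv a k"
proof (induction n)
  case 0
  then show ?case by (simp add: sinv_def)
next
  case (Suc n)
  show ?case
  proof (cases "nrm k = Suc n")
    case True
    then show ?thesis by (simp add: sinv_def)
  next
    case False
    then show ?thesis using Suc by simp
  qed
qed

lemma sconv_comm: "sconv a b = sconv b a"
  unfolding sconv_def by (rule ext, subst sum_PS_swap) (simp add: mult.commute)

lemma sinv_right:
  assumes a0: "a 0 \<noteq> 0"
  shows "sconv a (sinv a) = sid"
proof
  fix k
  show "sconv a (sinv a) k = sid k"
  proof (cases "k = 0")
    case True
    then show ?thesis using a0 by (simp add: sconv_def sid_def sum_PS_0 sinv_def)
  next
    case False
    then obtain n where n: "nrm k = Suc n" using nrm_pos by (metis gr0_implies_Suc)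
    have eq: "(\<Sum>(l, l')\<in>PS k - {(0, k)}. a l * ginv a n l') = (\<Sum>(l, l')\<in>PS k - {(0, k)}. a l * sinv a l')"
    proof (rule sum.cong[OF refl])
      fix p assume p: "p \<in> PS k - {(0, k)}"
      then obtain l l' where ll0: "p = (l, l')" "l + l' = k" by auto
      have "l \<noteq> 0" using p ll0 by auto
      note ll = ll0 this
      hence "nrm l' \<le> n" using nrm_add[of l l'] nrm_pos[of l] n by simp
      then show "(case p of (l, l') \<Rightarrow> a l * ginv a n l') = (case p of (l, l') \<Rightarrow> a l * sinv a l')"
        using ll ginv_stable[OF \<open>nrm l' \<le> n\<close>] by simp
    qed
    have sk: "sinv a k = - (\<Sum>(l, l')\<in>PS k - {(0, k)}. a l * sinv a l') / a 0"
      using n eq by (simp add: sinv_def)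
    have "sconv a (sinv a) k = a 0 * sinv a k + (\<Sum>(l, l')\<in>PS k - {(0, k)}. a l * sinv a l')"
      unfolding sconv_def by (subst sum.remove[OF finite_PS, of "(0,k)"]) auto
    also have "\<dots> = 0" using a0 sk by simp
    finally show ?thesis using False by (simp add: sid_def)
  qed
qed

lemma sconv_invertible_iff: "sconv_invertible a \<longleftrightarrow> a 0 \<noteq> 0"
proof
  assume "sconv_invertible a"
  then obtain b where "sconv a b = sid" unfolding sconv_invertible_def by blast
  hence "a 0 * b 0 = 1" using fun_cong[of _ _ 0] by (fastforce simp: sconv_def sum_PS_0 sid_def)
  then show "a 0 \<noteq> 0" by auto
next
  assume "a 0 \<noteq> 0"
  then show "sconv_invertible a"
    unfolding sconv_invertible_def using sinv_right sconv_comm by metis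
qed


lemma sum_mmult_left: "(\<Sum>x\<in>S. f x) ** (C::real^'n::finite^'m::finite) = (\<Sum>x\<in>S. f x ** C)"
  by (simp add: matrix_matrix_mult_def vec_eq_iff sum_distrib_right) (subst sum.swap, simp)

lemma sum_mmult_right: "(C::real^'n::finite^'m::finite) ** (\<Sum>x\<in>S. f x) = (\<Sum>x\<in>S. C ** f x)"
  by (simp add: matrix_matrix_mult_def vec_eq_iff sum_distrib_left) (subst sum.swap, simp)

lemma mconv_assoc: "mconv (mconv A B) C = mconv A (mconv B C)"
proof
  fix k
  have "mconv (mconv A B) C k = (\<Sum>(l, l')\<in>PS k. \<Sum>(m, m')\<in>PS l. (A m ** B m') ** C l')"
    unfolding mconv_def by (simp add: sum_mmult_left case_prod_beta)
  also have "\<dots> = (\<Sum>(l, l')\<in>PS k. \<Sum>(m, m')\<in>PS l'. (A l ** B m) ** C m')"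
    by (rule sum_PS_assoc)
  also have "\<dots> = mconv A (mconv B C) k"
    unfolding mconv_def by (simp add: sum_mmult_right case_prod_beta matrix_mul_assoc)
  finally show "mconv (mconv A B) C k = mconv A (mconv B C) k" .
qed

lemma mconv_mid_left: "mconv mid A = A"
proof
  fix k
  have "mconv mid A k = (\<Sum>(l, l')\<in>PS k. if l = 0 then A l' else 0)"
    unfolding mconv_def mid_def by (rule sum.cong) auto
  also have "\<dots> = A k" by (rule sum_PS_left0)
  finally show "mconv mid A k = A k" .
qed

lemma mconv_mid_right: "mconv A mid = A"
proof
  fix k
  have "mconv A mid k = (\<Sum>(l, l')\<in>PS k. if l = 0 then A l' else 0)"
    unfolding mconv_def mid_def by (subst sum_PS_swap) (rule sum.cong, auto)
  also have "\<dots> = A k" by (rule sum_PS_left0)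
  finally show "mconv A mid k = A k" .
qed

lemma conv_invertible_mult:
  assumes "conv_invertible A" "conv_invertible B"
  shows "conv_invertible (mconv A B)"
proof -
  obtain A' where A': "mconv A A' = mid" "mconv A' A = mid" using assms(1) unfolding conv_invertible_def by blast
  obtain B' where B': "mconv B B' = mid" "mconv B' B = mid" using assms(2) unfolding conv_invertible_def by blast
  have "mconv (mconv A B) (mconv B' A') = mid"
    by (metis A'(1) B'(1) mconv_assoc mconv_mid_left)
  moreover have "mconv (mconv B' A') (mconv A B) = mid"
    by (metis A'(2) B'(2) mconv_assoc mconv_mid_left)
  ultimately show ?thesis unfolding conv_invertible_def by blast
qed

lemma conv_invertible_mid: "conv_invertible mid"
  unfolding conv_invertible_def using mconv_mid_left by blast

lemma conv_invertible_det:
  fixes A :: "('d::finite, 's::finite) mseq"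
  shows "conv_invertible A \<Longrightarrow> det (A 0) \<noteq> 0"
proof -
  assume "conv_invertible A"
  then obtain B where "mconv A B = mid" unfolding conv_invertible_def by blast
  hence "mconv A B 0 = (mid::('d,'s) mseq) 0" by (rule fun_cong)
  hence "A 0 ** B 0 = mat 1" by (simp add: mconv_def sum_PS_0 mid_def)
  hence "det (A 0) * det (B 0) = 1" by (metis det_I det_mul)
  thus ?thesis by auto
qed




definition swapr :: "'s \<Rightarrow> 's \<Rightarrow> ('d::finite, 's::finite) mseq \<Rightarrow> ('d, 's) mseq" where
  "swapr i j X = (\<lambda>k. \<chi> r. if r = i then X k $ j else if r = j then X k $ i else X k $ r)"

definition scaler :: "'s \<Rightarrow> 'd rseq \<Rightarrow> ('d::finite, 's::finite) mseq \<Rightarrow> ('d, 's) mseq" where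
  "scaler i a X = (\<lambda>k. \<chi> r. if r = i then row_conv a X i k else X k $ r)"

definition addr :: "'s \<Rightarrow> 's \<Rightarrow> 'd rseq \<Rightarrow> ('d::finite, 's::finite) mseq \<Rightarrow> ('d, 's) mseq" where
  "addr i j a X = (\<lambda>k. \<chi> r. if r = j then X k $ j + row_conv a X i k else X k $ r)"

lemma elem_row_op_alt: "elem_row_op A B \<longleftrightarrow>
   (\<exists>i j. i \<noteq> j \<and> B = swapr i j A) \<or> (\<exists>i a. sconv_invertible a \<and> B = scaler i a A)
   \<or> (\<exists>i j a. i \<noteq> j \<and> sconv_invertible a \<and> B = addr i j a A)"
  unfolding elem_row_op_def swapr_def scaler_def addr_def by blast

definition rowmul :: "(nat^'d::finite \<Rightarrow> real^'s::finite) \<Rightarrow> ('d, 's) mseq \<Rightarrow> nat^'d \<Rightarrow> real^'s" where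
  "rowmul e X k = (\<Sum>(l, l')\<in>PS k. e l v* X l')"

lemma mmult_row: "(A ** B) $ r = (A $ r) v* B"
  by (simp add: matrix_matrix_mult_def vector_matrix_mult_def vec_eq_iff)

lemma mconv_row: "mconv E X k $ r = rowmul (\<lambda>l. E l $ r) X k"
  unfolding mconv_def rowmul_def by (simp add: case_prod_beta mmult_row)

lemma mid_row: "mid l $ r = (if l = 0 then mat 1 $ r else 0)"
  by (simp add: mid_def)

lemma if10_mult: "(if P then 1 else 0) * (x::real) = (if P then x else 0)" by simp

lemma mat1_row_vmult: "(mat 1 $ r) v* (M::real^'s::finite^'s) = M $ r"
  by (simp add: vector_matrix_mult_def mat_def vec_eq_iff if10_mult)

lemma vmult_add_left: "(x + y) v* (A::real^'n::finite^'m::finite) = x v* A + y v* A"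
  by (simp add: vector_matrix_mult_def vec_eq_iff sum.distrib distrib_right)

lemma rowmul_mid: "rowmul (\<lambda>l. mid l $ r) X k = X k $ r"
proof -
  have "rowmul (\<lambda>l. mid l $ r) X k = (\<Sum>(l, l')\<in>PS k. if l = 0 then X l' $ r else 0)"
    unfolding rowmul_def by (rule sum.cong) (auto simp: mid_row mat1_row_vmult)
  also have "\<dots> = X k $ r" by (rule sum_PS_left0)
  finally show ?thesis .
qed

lemma row_conv_mid: "row_conv a mid i l = a l *s (mat 1 $ i)"
proof -
  have "row_conv a mid i l $ t = a l * (mat 1 $ i $ t)" for t
  proof -
    have "row_conv a mid i l $ t = (\<Sum>(m, m')\<in>PS l. if m = 0 then a m' * (mat 1 $ i $ t) else 0)"
      unfolding row_conv_def by (simp, subst sum_PS_swap, rule sum.cong) (auto simp: mid_def)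
    also have "\<dots> = a l * (mat 1 $ i $ t)" by (rule sum_PS_left0)
    finally show ?thesis .
  qed
  thus ?thesis by (simp add: vec_eq_iff)
qed

lemma rowmul_rc:
  fixes X :: "('d::finite, 's::finite) mseq"
  shows "rowmul (row_conv a mid i) X k = row_conv a X i k"
proof -
  have *: "(a l *s ((mat 1::real^'s^'s) $ i)) v* M = a l *s (M $ i)" for l and M :: "real^'s^'s"
    by (simp add: vector_matrix_mult_def mat_def vec_eq_iff if10_mult mult.assoc flip: sum_distrib_left)
  have "rowmul (row_conv a mid i) X k = (\<Sum>(l, l')\<in>PS k. (a l *s ((mat 1::real^'s^'s) $ i)) v* X l')"
    unfolding rowmul_def row_conv_mid by simp
  also have "\<dots> = (\<Sum>(l, l')\<in>PS k. a l *s (X l' $ i))"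
    using * by simp
  also have "\<dots> = row_conv a X i k"
    by (simp add: row_conv_def vec_eq_iff case_prod_beta)
  finally show ?thesis .
qed

lemma rowmul_add: "rowmul (\<lambda>l. e1 l + e2 l) X k = rowmul e1 X k + rowmul e2 X k"
  unfolding rowmul_def by (simp add: vmult_add_left sum.distrib case_prod_beta)

lemma swapr_mconv: "swapr i j X = mconv (swapr i j mid) X"
proof (rule ext)
  fix k
  show "swapr i j X k = mconv (swapr i j mid) X k"
  proof (subst vec_eq_iff, intro allI)
    fix r
    show "swapr i j X k $ r = mconv (swapr i j mid) X k $ r"
      unfolding mconv_row by (simp add: swapr_def rowmul_mid)
  qed
qed

lemma scaler_mconv: "scaler i a X = mconv (scaler i a mid) X"
proof (rule ext)
  fix k
  show "scaler i a X k = mconv (scaler i a mid) X k"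
  proof (subst vec_eq_iff, intro allI)
    fix r
    show "scaler i a X k $ r = mconv (scaler i a mid) X k $ r"
      unfolding mconv_row by (simp add: scaler_def rowmul_mid rowmul_rc)
  qed
qed

lemma addr_mconv: "addr i j a X = mconv (addr i j a mid) X"
proof (rule ext)
  fix k
  show "addr i j a X k = mconv (addr i j a mid) X k"
  proof (subst vec_eq_iff, intro allI)
    fix r
    show "addr i j a X k $ r = mconv (addr i j a mid) X k $ r"
      unfolding mconv_row by (simp add: addr_def rowmul_mid rowmul_rc rowmul_add)
  qed
qed




lemma swapr_swapr: "swapr i j (swapr i j X) = X"
  by (auto simp: swapr_def vec_eq_iff)

lemma row_conv_cong: "(\<And>k. X k $ i = Y k $ i) \<Longrightarrow> row_conv a X i = row_conv a Y i"
  unfolding row_conv_def by simp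

lemma row_conv_scaler: "row_conv b (scaler i a X) i = row_conv (sconv b a) X i"
proof (rule ext)
  fix k
  have "row_conv b (scaler i a X) i k $ c = row_conv (sconv b a) X i k $ c" for c
  proof -
    have "row_conv b (scaler i a X) i k $ c = (\<Sum>(l, l')\<in>PS k. \<Sum>(m, m')\<in>PS l'. b l * a m * X m' $ i $ c)"
      by (simp add: row_conv_def scaler_def sum_distrib_left mult.assoc case_prod_beta)
    also have "\<dots> = (\<Sum>(l, l')\<in>PS k. \<Sum>(m, m')\<in>PS l. b m * a m' * X l' $ i $ c)"
      by (rule sum_PS_assoc[symmetric])
    also have "\<dots> = row_conv (sconv b a) X i k $ c"
      by (simp add: row_conv_def sconv_def sum_distrib_right case_prod_beta)
    finally show ?thesis .
  qed
  thus "row_conv b (scaler i a X) i k = row_conv (sconv b a) X i k" by (simp add: vec_eq_iff)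
qed

lemma row_conv_sid: "row_conv sid X i k = X k $ i"
proof -
  have "row_conv sid X i k $ c = X k $ i $ c" for c
  proof -
    have "row_conv sid X i k $ c = (\<Sum>(l, l')\<in>PS k. if l = 0 then X l' $ i $ c else 0)"
      unfolding row_conv_def sid_def by simp (rule sum.cong, auto)
    also have "\<dots> = X k $ i $ c" by (rule sum_PS_left0)
    finally show ?thesis .
  qed
  thus ?thesis by (simp add: vec_eq_iff)
qed

lemma row_conv_addf: "row_conv (\<lambda>k. a k + b k) X i k = row_conv a X i k + row_conv b X i k"
  by (simp add: row_conv_def vec_eq_iff distrib_right sum.distrib case_prod_beta)

lemma row_conv_neg: "row_conv (\<lambda>k. - a k) X i k = - row_conv a X i k"
  by (simp add: row_conv_def vec_eq_iff sum_negf case_prod_beta)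

lemma row_conv_0: "row_conv a X i 0 = a 0 *s X 0 $ i"
  unfolding row_conv_def sum_PS_0 by (simp add: vec_eq_iff)

lemma row_conv_zero: "row_conv (\<lambda>k. 0) X i k = 0"
  by (simp add: row_conv_def vec_eq_iff)

lemma scaler_inv:
  fixes X :: "('d::finite, 's::finite) mseq"
  assumes "sconv b a = sid"
  shows "scaler i b (scaler i a X) = X"
proof (rule ext)
  fix k :: "nat^'d"
  have 1: "row_conv b (scaler i a X) i k = X k $ i" by (simp add: row_conv_scaler assms row_conv_sid)
  have 2: "scaler i b Y k = (\<chi> r. if r = i then row_conv b Y i k else Y k $ r)" for Y by (simp add: scaler_def)
  have 3: "scaler i a X k $ r = X k $ r" if "r \<noteq> i" for r by (simp add: scaler_def that)
  show "scaler i b (scaler i a X) k = X k"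
    unfolding 2 by (simp add: vec_eq_iff 1 3)
qed

lemma addr_addr:
  fixes X :: "('d::finite, 's::finite) mseq"
  assumes ij: "i \<noteq> j"
  shows "addr i j b (addr i j a X) = addr i j (\<lambda>k. a k + b k) X"
proof (rule ext)
  fix k :: "nat^'d"
  have 1: "row_conv b (addr i j a X) i = row_conv b X i"
    by (rule row_conv_cong) (simp add: addr_def ij)
  have 2: "addr i j c Y k = (\<chi> r. if r = j then Y k $ j + row_conv c Y i k else Y k $ r)" for c Y
    by (simp add: addr_def)
  have 3: "addr i j a X k $ r = X k $ r" if "r \<noteq> j" for r by (simp add: addr_def that)
  have 4: "addr i j a X k $ j = X k $ j + row_conv a X i k" by (simp add: addr_def)
  show "addr i j b (addr i j a X) k = addr i j (\<lambda>k. a k + b k) X k"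
    unfolding 2 1 by (simp add: vec_eq_iff 3 4 row_conv_addf)
qed

lemma addr_zero: "addr i j (\<lambda>k. 0) X = X"
  by (simp add: addr_def row_conv_zero vec_eq_iff fun_eq_iff)

lemma addr_inv: "i \<noteq> j \<Longrightarrow> addr i j (\<lambda>k. - a k) (addr i j a X) = X"
  by (simp add: addr_addr addr_zero)

lemma sconv_invertible_sid_inv:
  fixes b :: "'d::finite rseq"
  shows "sconv b a = sid \<Longrightarrow> sconv_invertible b"
proof -
  assume "sconv b a = sid"
  hence "sconv b a 0 = sid (0::nat^'d)" by (rule fun_cong)
  hence "b 0 * a 0 = 1" by (simp add: sconv_def sum_PS_0 sid_def)
  thus ?thesis by (auto simp: sconv_invertible_iff)
qed

lemma elem_row_op_sym: "elem_row_op X Y \<Longrightarrow> elem_row_op Y X"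
  unfolding elem_row_op_alt
proof (elim disjE exE conjE)
  fix i j assume sw: "i \<noteq> j" "Y = swapr i j X"
  then have "X = swapr i j Y" by (simp add: swapr_swapr)
  then show "(\<exists>i j. i \<noteq> j \<and> X = swapr i j Y) \<or> (\<exists>i a. sconv_invertible a \<and> X = scaler i a Y) \<or>
    (\<exists>i j a. i \<noteq> j \<and> sconv_invertible a \<and> X = addr i j a Y)" using sw(1) by blast
next
  fix i a assume sc: "sconv_invertible a" "Y = scaler i a X"
  obtain b where b: "sconv b a = sid" using sc(1) unfolding sconv_invertible_def by blast
  have "scaler i b Y = X" unfolding sc(2) by (rule scaler_inv[OF b])
  hence "X = scaler i b Y" by simp
  moreover have "sconv_invertible b" using b sconv_invertible_sid_inv by blast
  ultimately show "(\<exists>i j. i \<noteq> j \<and> X = swapr i j Y) \<or> (\<exists>i a. sconv_invertible a \<and> X = scaler i a Y) \<or>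
    (\<exists>i j a. i \<noteq> j \<and> sconv_invertible a \<and> X = addr i j a Y)" by blast
next
  fix i j a assume ad: "i \<noteq> j" "sconv_invertible a" "Y = addr i j a X"
  have "addr i j (\<lambda>k. - a k) Y = X" unfolding ad(3) by (rule addr_inv[OF ad(1)])
  hence "X = addr i j (\<lambda>k. - a k) Y" by simp
  moreover have "sconv_invertible (\<lambda>k. - a k)" using ad(2) by (simp add: sconv_invertible_iff)
  ultimately show "(\<exists>i j. i \<noteq> j \<and> X = swapr i j Y) \<or> (\<exists>i a. sconv_invertible a \<and> X = scaler i a Y) \<or>
    (\<exists>i j a. i \<noteq> j \<and> sconv_invertible a \<and> X = addr i j a Y)" using ad(1) by blast
qed



definition cols :: "'s set \<Rightarrow> ('d::finite, 's::finite) mseq \<Rightarrow> bool" where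
  "cols S X \<longleftrightarrow> (\<forall>t\<in>S. \<forall>k r. X k $ r $ t = mid k $ r $ t)"

lemma mid_entry: "mid k $ r $ t = (if k = 0 \<and> r = t then 1 else 0)"
  by (simp add: mid_def mat_def)

lemma det_nz_ker:
  fixes A :: "real^'n::finite^'n"
  assumes "det A \<noteq> 0" "A *v x = 0"
  shows "x = 0"
proof -
  obtain B where "B ** A = mat 1" using assms(1) invertible_det_nz invertible_left_inverse by blast
  hence "x = B *v (A *v x)" by (simp add: matrix_vector_mul_assoc)
  thus ?thesis using assms(2) by simp
qed

lemma pivot:
  fixes X :: "('d::finite, 's::finite) mseq"
  assumes d: "det (X 0) \<noteq> 0" and c: "cols S X" and j: "j \<notin> S"
  shows "\<exists>i. i \<notin> S \<and> X 0 $ i $ j \<noteq> 0"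
proof (rule ccontr)
  assume "\<not> ?thesis"
  hence z: "\<And>i. i \<notin> S \<Longrightarrow> X 0 $ i $ j = 0" by blast
  define x :: "real^'s" where "x = (\<chi> t. if t = j then 1 else if t \<in> S then - X 0 $ t $ j else 0)"
  have "(X 0 *v x) $ r = 0" for r
  proof -
    have tm: "X 0 $ r $ t * x $ t = (if t = j then X 0 $ r $ j else 0) + (if r = t \<and> r \<in> S then - X 0 $ r $ j else 0)" for t
    proof (cases "t = j")
      case True
      then show ?thesis using j by (auto simp: x_def)
    next
      case False
      show ?thesis
      proof (cases "t \<in> S")
        case True
        then have "X 0 $ r $ t = (if r = t then 1 else 0)" using c by (simp add: cols_def mid_entry)
        then show ?thesis using False True by (auto simp: x_def)
      next
        case False2: False
        then show ?thesis using False by (auto simp: x_def)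
      qed
    qed
    have "(X 0 *v x) $ r = (\<Sum>t\<in>UNIV. X 0 $ r $ t * x $ t)"
      by (simp add: matrix_vector_mult_def)
    also have "\<dots> = X 0 $ r $ j + (if r \<in> S then - X 0 $ r $ j else 0)"
      unfolding tm sum.distrib by simp
    also have "\<dots> = 0" using z by auto
    finally show ?thesis .
  qed
  hence "X 0 *v x = 0" by (simp add: vec_eq_iff)
  hence "x = 0" using det_nz_ker d by blast
  moreover have "x $ j = 1" by (simp add: x_def)
  ultimately show False by simp
qed

lemma cols_swapr:
  assumes "cols S X" "i \<notin> S" "j \<notin> S"
  shows "cols S (swapr i j X)"
  using assms unfolding cols_def swapr_def by (auto simp: mid_entry)

lemma det_swapr:
  fixes X :: "('d::finite, 's::finite) mseq"
  assumes "i \<noteq> j"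
  shows "det (swapr i j X 0) = - det (X 0)"
proof -
  have "swapr i j X 0 = (\<chi> r. X 0 $ Transposition.transpose i j r)"
    by (simp add: swapr_def vec_eq_iff Transposition.transpose_def)
  moreover have "Transposition.transpose i j permutes (UNIV :: 's set)"
    by (rule permutes_swap_id) auto
  ultimately show ?thesis using det_permute_rows[of "Transposition.transpose i j" "X 0"] assms
    by (simp add: sign_swap_id)
qed

lemma cols_scaler:
  assumes "cols S X" "j \<notin> S"
  shows "cols S (scaler j b X)"
  unfolding cols_def
proof (intro ballI allI)
  fix t k r assume t: "t \<in> S"
  show "scaler j b X k $ r $ t = mid k $ r $ t"
  proof (cases "r = j")
    case True
    have "j \<noteq> t" using assms t by auto
    hence "row_conv b X j k $ t = 0"
      using assms t unfolding row_conv_def cols_def by (auto simp: mid_entry)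
    then show ?thesis using True assms t by (auto simp: scaler_def mid_entry)
  next
    case False
    then show ?thesis using assms t by (simp add: scaler_def cols_def)
  qed
qed

lemma det_scaler: "det (scaler j b X 0) = b 0 * det (X 0)"
proof -
  have "scaler j b X 0 = (\<chi> r. if r = j then b 0 *s X 0 $ r else X 0 $ r)"
    by (simp add: scaler_def row_conv_0 vec_eq_iff)
  then show ?thesis using det_row_mul[of j "b 0" "\<lambda>r. X 0 $ r" "\<lambda>r. X 0 $ r"] by simp
qed

lemma cols_addr:
  assumes "cols S X" "i \<notin> S"
  shows "cols S (addr i r c X)"
  unfolding cols_def
proof (intro ballI allI)
  fix t k r' assume t: "t \<in> S"
  have "i \<noteq> t" using assms t by auto
  hence "row_conv c X i k $ t = 0"
    using assms t unfolding row_conv_def cols_def by (auto simp: mid_entry)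
  then show "addr i r c X k $ r' $ t = mid k $ r' $ t"
    using assms t by (auto simp: addr_def cols_def)
qed

lemma row_eq: "row i A = A $ i"
  by (simp add: row_def vec_eq_iff)

lemma det_addr:
  assumes "i \<noteq> r"
  shows "det (addr i r c X 0) = det (X 0)"
proof -
  have "addr i r c X 0 = (\<chi> k. if k = r then row r (X 0) + c 0 *s row i (X 0) else row k (X 0))"
    by (simp add: addr_def row_conv_0 vec_eq_iff row_eq)
  then show ?thesis using det_row_operation[of r i "X 0" "c 0"] assms by simp
qed


lemma sum_PS_right0: "(\<Sum>(l, l')\<in>PS k. f l * sid l') = (f k :: real)"
proof -
  have "(\<Sum>(l, l')\<in>PS k. f l * sid l') = (\<Sum>(l, l')\<in>PS k. f l' * sid l)"
    by (rule sum_PS_swap)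
  also have "\<dots> = (\<Sum>(l, l')\<in>PS k. if l = 0 then f l' else 0)"
    by (rule sum.cong) (auto simp: sid_def)
  also have "\<dots> = f k" by (rule sum_PS_left0)
  finally show ?thesis .
qed

lemma addr_step:
  assumes "i \<noteq> r"
  shows "elem_row_op\<^sup>*\<^sup>* X (addr i r c X)"
proof (cases "c 0 = 0")
  case False
  hence "sconv_invertible c" by (simp add: sconv_invertible_iff)
  hence "elem_row_op X (addr i r c X)" unfolding elem_row_op_alt using assms by blast
  then show ?thesis by blast
next
  case True
  have inv1: "sconv_invertible (\<lambda>k. c k + 1)" using True by (simp add: sconv_invertible_iff)
  have inv2: "sconv_invertible (\<lambda>k. - 1 :: real)" by (simp add: sconv_invertible_iff)
  have e1: "elem_row_op X (addr i r (\<lambda>k. c k + 1) X)" unfolding elem_row_op_alt using assms inv1 by blast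
  have e2: "elem_row_op (addr i r (\<lambda>k. c k + 1) X) (addr i r (\<lambda>k. - 1) (addr i r (\<lambda>k. c k + 1) X))"
    unfolding elem_row_op_alt using assms inv2 by blast
  have "addr i r (\<lambda>k. - 1) (addr i r (\<lambda>k. c k + 1) X) = addr i r (\<lambda>k. c k + 1 + - 1) X"
    by (rule addr_addr[OF assms])
  also have "(\<lambda>k. c k + 1 + - 1) = c" by simp
  finally show ?thesis using e1 e2 by (metis rtranclp.rtrancl_into_rtrancl r_into_rtranclp)
qed

lemma clear_col:
  fixes X :: "('d::finite, 's::finite) mseq"
  assumes "j \<notin> S" "cols S X" "\<forall>k. X k $ j $ j = sid k" "det (X 0) \<noteq> 0"
  shows "\<exists>Y. elem_row_op\<^sup>*\<^sup>* X Y \<and> cols (insert j S) Y \<and> det (Y 0) \<noteq> 0"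
  using assms
proof (induction "card {r. r \<noteq> j \<and> (\<exists>k. X k $ r $ j \<noteq> 0)}" arbitrary: X rule: less_induct)
  case less
  show ?case
  proof (cases "{r. r \<noteq> j \<and> (\<exists>k. X k $ r $ j \<noteq> 0)} = {}")
    case True
    have "cols (insert j S) X"
      unfolding cols_def
    proof (intro ballI allI)
      fix t k r assume t: "t \<in> insert j S"
      show "X k $ r $ t = mid k $ r $ t"
      proof (cases "t = j")
        case tj: True
        show ?thesis
        proof (cases "r = j")
          case True
          then show ?thesis using tj less.prems(3) by (simp add: sid_def mid_entry)
        next
          case False
          then show ?thesis using tj \<open>_ = {}\<close> by (auto simp: mid_entry)
        qed
      next
        case False
        then show ?thesis using t less.prems(2) by (auto simp: cols_def)
      qed
    qed
    then show ?thesis using less.prems by blast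
  next
    case False
    then obtain r where r: "r \<noteq> j" "\<exists>k. X k $ r $ j \<noteq> 0" by auto
    define c where "c = (\<lambda>k. - X k $ r $ j)"
    define X' where "X' = addr j r c X"
    have step: "elem_row_op\<^sup>*\<^sup>* X X'" unfolding X'_def using addr_step r(1) by metis
    have X'jj: "X' k $ j $ j = X k $ j $ j" for k using r(1) by (simp add: X'_def addr_def)
    have X'oth: "X' k $ t = X k $ t" if "t \<noteq> r" for k t using that by (simp add: X'_def addr_def)
    have X'rj: "X' k $ r $ j = 0" for k
    proof -
      have "row_conv c X j k $ j = (\<Sum>(l, l')\<in>PS k. c l * sid l')"
        using less.prems(3) by (simp add: row_conv_def)
      also have "\<dots> = c k" by (rule sum_PS_right0)
      finally show ?thesis by (simp add: X'_def addr_def c_def)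
    qed
    have Req: "{t. t \<noteq> j \<and> (\<exists>k. X' k $ t $ j \<noteq> 0)} = {t. t \<noteq> j \<and> (\<exists>k. X k $ t $ j \<noteq> 0)} - {r}"
    proof (rule set_eqI)
      fix t show "t \<in> {t. t \<noteq> j \<and> (\<exists>k. X' k $ t $ j \<noteq> 0)} \<longleftrightarrow> t \<in> {t. t \<noteq> j \<and> (\<exists>k. X k $ t $ j \<noteq> 0)} - {r}"
        by (cases "t = r") (auto simp: X'rj X'oth)
    qed
    have lt: "card {t. t \<noteq> j \<and> (\<exists>k. X' k $ t $ j \<noteq> 0)} < card {t. t \<noteq> j \<and> (\<exists>k. X k $ t $ j \<noteq> 0)}"
      unfolding Req using r by (intro card_Diff1_less) auto
    have c': "cols S X'" unfolding X'_def using cols_addr less.prems by blast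
    have "det (X' 0) = det (X 0)" unfolding X'_def by (rule det_addr) (use r(1) in auto)
    hence d': "det (X' 0) \<noteq> 0" using less.prems(4) by simp
    have s': "\<forall>k. X' k $ j $ j = sid k" using X'jj less.prems(3) by simp
    obtain Y where Y: "elem_row_op\<^sup>*\<^sup>* X' Y" "cols (insert j S) Y" "det (Y 0) \<noteq> 0"
      using less.hyps[OF lt less.prems(1) c' s' d'] by blast
    then show ?thesis using step by (meson rtranclp_trans)
  qed
qed

lemma elim_main:
  fixes X :: "('d::finite, 's::finite) mseq"
  shows "card (- S) = n \<Longrightarrow> cols S X \<Longrightarrow> det (X 0) \<noteq> 0 \<Longrightarrow> elem_row_op\<^sup>*\<^sup>* X mid"
proof (induction n arbitrary: S X)
  case 0
  hence "- S = {}" by simp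
  hence "S = UNIV" by blast
  hence "X = mid" using 0(2) by (auto simp: cols_def vec_eq_iff fun_eq_iff)
  then show ?case by simp
next
  case (Suc n)
  have "- S \<noteq> {}" using Suc.prems(1) by auto
  then obtain j where j: "j \<notin> S" by blast
  obtain i where i: "i \<notin> S" "X 0 $ i $ j \<noteq> 0" using pivot[OF Suc.prems(3) Suc.prems(2) j] by blast
  define X1 where "X1 = (if i = j then X else swapr i j X)"
  have s1: "elem_row_op\<^sup>*\<^sup>* X X1"
  proof (cases "i = j")
    case True then show ?thesis by (simp add: X1_def)
  next
    case False
    hence "elem_row_op X X1" unfolding elem_row_op_alt X1_def by auto
    then show ?thesis by blast
  qed
  have c1: "cols S X1" using cols_swapr[OF Suc.prems(2) i(1) j] Suc.prems(2) by (simp add: X1_def)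
  have d1: "det (X1 0) \<noteq> 0" using det_swapr[of i j X] Suc.prems(3) by (simp add: X1_def)
  have p1: "X1 0 $ j $ j \<noteq> 0" using i(2) by (cases "i = j") (simp_all add: X1_def swapr_def)
  define p where "p = (\<lambda>k. X1 k $ j $ j)"
  define b where "b = sinv p"
  have bp: "sconv b p = sid" unfolding b_def using sinv_right[of p] p1 sconv_comm by (metis p_def)
  have bi: "sconv_invertible b" using sconv_invertible_sid_inv[OF bp] .
  hence b0: "b 0 \<noteq> 0" by (simp add: sconv_invertible_iff)
  define X2 where "X2 = scaler j b X1"
  have s2: "elem_row_op X1 X2" unfolding elem_row_op_alt X2_def using bi by blast
  have c2: "cols S X2" unfolding X2_def using cols_scaler[OF c1 j] .
  have "det (X2 0) = b 0 * det (X1 0)" unfolding X2_def by (rule det_scaler)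
  hence d2: "det (X2 0) \<noteq> 0" using d1 b0 by simp
  have jj2: "\<forall>k. X2 k $ j $ j = sid k"
  proof
    fix k
    have "X2 k $ j $ j = sconv b p k" by (simp add: X2_def scaler_def row_conv_def sconv_def p_def)
    thus "X2 k $ j $ j = sid k" using bp by simp
  qed
  obtain Y where Y: "elem_row_op\<^sup>*\<^sup>* X2 Y" "cols (insert j S) Y" "det (Y 0) \<noteq> 0"
    using clear_col[OF j c2 jj2 d2] by blast
  have "card (- insert j S) = n" using Suc.prems(1) j
    by (metis Compl_insert card_Diff_singleton ComplI diff_Suc_1 finite)
  hence "elem_row_op\<^sup>*\<^sup>* Y mid" using Suc.IH Y by blast
  then show ?case using s1 s2 Y(1) by (meson rtranclp_trans converse_rtranclp_into_rtranclp)
qed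




lemma elem_op_mconv:
  assumes "elem_row_op X Y"
  shows "\<exists>E. elementary_mseq E \<and> Y = mconv E X"
  using assms unfolding elem_row_op_alt
proof (elim disjE exE conjE)
  fix i j assume h: "i \<noteq> j" "Y = swapr i j X"
  have "elementary_mseq (swapr i j mid)" unfolding elementary_mseq_def elem_row_op_alt using h(1) by blast
  moreover have "Y = mconv (swapr i j mid) X" unfolding h(2) by (rule swapr_mconv)
  ultimately show "\<exists>E. elementary_mseq E \<and> Y = mconv E X" by blast
next
  fix i a assume h: "sconv_invertible a" "Y = scaler i a X"
  have "elementary_mseq (scaler i a mid)" unfolding elementary_mseq_def elem_row_op_alt using h(1) by blast
  moreover have "Y = mconv (scaler i a mid) X" unfolding h(2) by (rule scaler_mconv)
  ultimately show "\<exists>E. elementary_mseq E \<and> Y = mconv E X" by blast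
next
  fix i j a assume h: "i \<noteq> j" "sconv_invertible a" "Y = addr i j a X"
  have "elementary_mseq (addr i j a mid)" unfolding elementary_mseq_def elem_row_op_alt using h(1,2) by blast
  moreover have "Y = mconv (addr i j a mid) X" unfolding h(3) by (rule addr_mconv)
  ultimately show "\<exists>E. elementary_mseq E \<and> Y = mconv E X" by blast
qed

lemma mconv_elem_op:
  assumes "elementary_mseq E"
  shows "elem_row_op X (mconv E X)"
proof -
  have "elem_row_op mid E" using assms unfolding elementary_mseq_def .
  then show ?thesis
    unfolding elem_row_op_alt[of mid E]
  proof (elim disjE exE conjE)
    fix i j assume h: "i \<noteq> j" "E = swapr i j mid"
    have "mconv E X = swapr i j X" unfolding h(2) by (rule swapr_mconv[symmetric])
    then show ?thesis unfolding elem_row_op_alt using h(1) by blast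
  next
    fix i a assume h: "sconv_invertible a" "E = scaler i a mid"
    have "mconv E X = scaler i a X" unfolding h(2) by (rule scaler_mconv[symmetric])
    then show ?thesis unfolding elem_row_op_alt using h(1) by blast
  next
    fix i j a assume h: "i \<noteq> j" "sconv_invertible a" "E = addr i j a mid"
    have "mconv E X = addr i j a X" unfolding h(3) by (rule addr_mconv[symmetric])
    then show ?thesis unfolding elem_row_op_alt using h(1,2) by blast
  qed
qed

lemma elementary_invertible:
  assumes E: "elementary_mseq E"
  shows "conv_invertible E"
proof -
  have "elem_row_op E mid" using E unfolding elementary_mseq_def by (rule elem_row_op_sym)
  then obtain E' where E': "elementary_mseq E'" "mid = mconv E' E" using elem_op_mconv by blast
  have "elem_row_op E' mid" using E'(1) unfolding elementary_mseq_def by (rule elem_row_op_sym)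
  then obtain E'' where E'': "mid = mconv E'' E'" using elem_op_mconv by blast
  have "E'' = mconv E'' mid" by (simp only: mconv_mid_right)
  also have "\<dots> = mconv E'' (mconv E' E)" by (simp only: E'(2)[symmetric])
  also have "\<dots> = mconv (mconv E'' E') E" by (simp only: mconv_assoc)
  also have "\<dots> = E" by (simp only: E''[symmetric] mconv_mid_left)
  finally have "mconv E E' = mid" using E'' by simp
  hence "mconv E E' = mid \<and> mconv E' E = mid" using E'(2) by simp
  thus ?thesis unfolding conv_invertible_def by blast
qed

lemma rtranclp_sym: "elem_row_op\<^sup>*\<^sup>* X Y \<Longrightarrow> elem_row_op\<^sup>*\<^sup>* Y X"
proof (induction rule: rtranclp_induct)
  case base then show ?case by simp
next
  case (step Y Z)
  then show ?case using elem_row_op_sym by (meson converse_rtranclp_into_rtranclp)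
qed

lemma row_equivalent_mid: "row_equivalent A mid \<longleftrightarrow> elem_row_op\<^sup>*\<^sup>* mid A"
  unfolding row_equivalent_def using rtranclp_sym by blast

lemma from_mid_invertible: "elem_row_op\<^sup>*\<^sup>* mid A \<Longrightarrow> conv_invertible A"
proof (induction rule: rtranclp_induct)
  case base then show ?case by (rule conv_invertible_mid)
next
  case (step Y Z)
  then obtain E where "elementary_mseq E" "Z = mconv E Y" using elem_op_mconv by blast
  then show ?case using step.IH elementary_invertible conv_invertible_mult by blast
qed

lemma from_mid_foldr: "elem_row_op\<^sup>*\<^sup>* mid A \<Longrightarrow> \<exists>Es. (\<forall>E \<in> set Es. elementary_mseq E) \<and> A = foldr mconv Es mid"
proof (induction rule: rtranclp_induct)
  case base
  have "mid = foldr mconv [] mid" by simp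
  then show ?case by (metis empty_iff list.set(1))
next
  case (step Y Z)
  then obtain E where E: "elementary_mseq E" "Z = mconv E Y" using elem_op_mconv by blast
  obtain Es where Es: "\<forall>E \<in> set Es. elementary_mseq E" "Y = foldr mconv Es mid" using step.IH by blast
  have "Z = foldr mconv (E # Es) mid" using E(2) Es(2) by simp
  moreover have "\<forall>E' \<in> set (E # Es). elementary_mseq E'" using E(1) Es(1) by simp
  ultimately show ?case by blast
qed

lemma foldr_from_mid: "(\<forall>E \<in> set Es. elementary_mseq E) \<Longrightarrow> elem_row_op\<^sup>*\<^sup>* mid (foldr mconv Es mid)"
proof (induction Es)
  case Nil then show ?case by simp
next
  case (Cons E Es)
  hence "elem_row_op\<^sup>*\<^sup>* mid (foldr mconv Es mid)" by simp
  moreover have "elem_row_op (foldr mconv Es mid) (mconv E (foldr mconv Es mid))"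
    using Cons.prems by (intro mconv_elem_op) simp
  ultimately show ?case by simp
qed

theorem proposition4:
  fixes A :: "nat^'d::finite \<Rightarrow> real^'s::finite^'s"
  shows "(conv_invertible A \<longleftrightarrow> row_equivalent A mid)
       \<and> (row_equivalent A mid \<longleftrightarrow>
            (\<exists>Es. (\<forall>E \<in> set Es. elementary_mseq E) \<and> A = foldr mconv Es mid))"
proof (intro conjI iffI)
  assume "conv_invertible A"
  hence d: "det (A 0) \<noteq> 0" by (rule conv_invertible_det)
  have c: "cols {} A" by (simp add: cols_def)
  have n: "card (- ({}::'s set)) = CARD('s)" by simp
  have "elem_row_op\<^sup>*\<^sup>* A mid" by (rule elim_main[OF n c d])
  thus "row_equivalent A mid" unfolding row_equivalent_def by (rule disjI1)
next
  assume "row_equivalent A mid"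
  hence "elem_row_op\<^sup>*\<^sup>* mid A" by (simp only: row_equivalent_mid)
  thus "conv_invertible A" by (rule from_mid_invertible)
next
  assume "row_equivalent A mid"
  hence "elem_row_op\<^sup>*\<^sup>* mid A" by (simp only: row_equivalent_mid)
  thus "\<exists>Es. (\<forall>E \<in> set Es. elementary_mseq E) \<and> A = foldr mconv Es mid"
    by (rule from_mid_foldr)
next
  assume "\<exists>Es. (\<forall>E \<in> set Es. elementary_mseq E) \<and> A = foldr mconv Es mid"
  then obtain Es where Es: "\<forall>E \<in> set Es. elementary_mseq E" "A = foldr mconv Es mid" by blast
  have "elem_row_op\<^sup>*\<^sup>* mid (foldr mconv Es mid)" using Es(1) by (rule foldr_from_mid)
  hence "elem_row_op\<^sup>*\<^sup>* mid A" using Es(2) by simp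
  thus "row_equivalent A mid" by (simp only: row_equivalent_mid)
qed

end
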